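(* For $h,r>0$ with $\frac hr\le\omega$, let $\Pi(h,r)>0$ be the largest positive solution of $\Pi\cosh\frac h\Pi=r$. Then $$\sup\left\{\sinh\frac{h}{\Pi(h,r)}:\ h,r>0,\ \frac hr\le\omega\right\}<z_0,$$ where $z_0=\sqrt{\tfrac12(\sqrt5-1)}$.
   Context: Let $\Xi$ be the unique positive solution of $\xi\tanh\frac1\xi+\mathrm{sech}^2\frac1\xi=\xi$, and $\omega=\frac{1}{\Xi\cosh(1/\Xi)}$ (numerically $0.52<\omega<0.53$). *)

theory Defs
  imports Complex_Main
begin

definition Xi :: real where
  "Xi = (THE \<xi>. \<xi> > 0 \<and> \<xi> * tanh (1/\<xi>) + 1 / (cosh (1/\<xi>))^2 = \<xi>)"

definition omega :: real where
  "omega = 1 / (Xi * cosh (1 / Xi))"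

definition Pi_hr :: "real \<Rightarrow> real \<Rightarrow> real" where
  "Pi_hr h r = (GREATEST p. p > 0 \<and> p * cosh (h / p) = r)"

definition z0 :: real where
  "z0 = sqrt ((sqrt 5 - 1) / 2)"

end

theory Submission
  imports Defs
begin

definition FF :: "real \<Rightarrow> real" where "FF s = 2*s - 1 - exp(-2*s)"

lemma FF_mono: "x < y \<Longrightarrow> FF x < FF y"
  unfolding FF_def by (smt (verit) exp_less_cancel_iff)

lemma key_eq:
  assumes "s > 0"
  shows "((1/s) * tanh (1/(1/s)) + 1 / (cosh (1/(1/s)))^2 = 1/s) \<longleftrightarrow> FF s = 0"
proof -
  have c: "cosh s > 0" by (simp add: cosh_real_pos)
  have e2: "exp(-2*s) = exp(-s)^2" by (simp add: power2_eq_square flip: exp_add)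
  have "((1/s) * tanh s + 1 / (cosh s)^2 = 1/s) \<longleftrightarrow> sinh s * cosh s + s = (cosh s)^2"
    using c assms by (auto simp: tanh_def field_simps power2_eq_square)
      (metis distrib_left mult_left_cancel less_irrefl)+
  also have "\<dots> \<longleftrightarrow> s = cosh s * (cosh s - sinh s)" by (auto simp: algebra_simps power2_eq_square)
  also have "cosh s * (cosh s - sinh s) = (1 + exp(-2*s))/2"
    unfolding cosh_def sinh_def e2 by (simp add: field_simps power2_eq_square flip: exp_add)
  finally show ?thesis using assms by (simp add: FF_def) linarith
qed

lemma exp_ub: "exp (5/4::real) < 4"
proof -
  have "exp (-(5/32)::real) \<ge> 27/32" using exp_ge_add_one_self[of "-(5/32)::real"] by simp
  hence a: "exp (5/32::real) \<le> 32/27" by (simp add: exp_minus field_simps)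
  have "exp (5/4::real) = exp (5/32) ^ 8" by (simp flip: exp_of_nat_mult)
  also have "\<dots> \<le> (32/27) ^ 8" by (rule power_mono[OF a]) simp
  also have "\<dots> = 1099511627776/282429536481" by (simp add: power_divide)
  also have "\<dots> < 4" by simp
  finally show ?thesis .
qed

lemma s_exists: "\<exists>s. 0 \<le> s \<and> s \<le> 1 \<and> FF s = 0"
proof -
  have "FF 0 \<le> 0" by (simp add: FF_def)
  moreover have "0 \<le> FF 1" by (simp add: FF_def)
  moreover have "continuous_on {0..1} FF" unfolding FF_def by (intro continuous_intros)
  ultimately show ?thesis using IVT'[of FF 0 0 1] by auto
qed

lemma P_iff: "x > 0 \<Longrightarrow> (x * tanh (1/x) + 1 / (cosh (1/x))^2 = x) \<longleftrightarrow> FF (1/x) = 0"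
  using key_eq[of "1/x"] by simp

lemma Xi_facts: "Xi > 0 \<and> FF (1/Xi) = 0"
proof -
  obtain s0 where s0: "0 \<le> s0" "s0 \<le> 1" "FF s0 = 0" using s_exists by blast
  have "s0 \<noteq> 0" using s0 by (auto simp: FF_def)
  hence sp: "s0 > 0" using s0 by simp
  have P1: "1/s0 > 0 \<and> (1/s0) * tanh (1/(1/s0)) + 1 / (cosh (1/(1/s0)))^2 = 1/s0"
      using P_iff[of "1/s0"] sp s0 by simp
  have U: "y = 1/s0" if y: "(y::real) > 0 \<and> y * tanh (1/y) + 1 / (cosh (1/y))^2 = y" for y
  proof -
    have "FF (1/y) = 0" using P_iff y by blast
    hence "1/y = s0" using s0(3) FF_mono by (metis less_irrefl linorder_neqE)
    thus "y = 1/s0" by (metis inverse_eq_divide inverse_inverse_eq)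
  qed
  have ex: "\<exists>!x::real. x > 0 \<and> x * tanh (1/x) + 1 / (cosh (1/x))^2 = x"
    using P1 U by blast
  have "Xi > 0 \<and> Xi * tanh (1/Xi) + 1 / (cosh (1/Xi))^2 = Xi"
    unfolding Xi_def by (rule theI'[OF ex])
  thus ?thesis using P_iff by blast
qed

lemma s_bounds: "5/8 < 1/Xi \<and> 1/Xi < 1"
proof -
  have "FF (5/8) < 0" using exp_ub by (simp add: FF_def exp_minus field_simps)
  moreover have "FF 1 > 0" by (simp add: FF_def)
  ultimately show ?thesis using Xi_facts FF_mono by (metis linorder_not_less order_le_less order_less_irrefl)
qed

lemma sinh_sq: assumes "FF s = 0" "5/8 \<le> s" "s \<le> 1" shows "(sinh s)^2 \<le> 9/16"
proof -
  define u where "u = exp (-s)"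
  have u: "u > 0" unfolding u_def by simp
  have u2: "u^2 = 2*s - 1" using assms(1) unfolding FF_def u_def
    by (simp add: power2_eq_square flip: exp_add)
  have "sinh s = (1/u - u)/2" 
  proof -
    have "exp s = 1/u" unfolding u_def by (simp add: exp_minus inverse_eq_divide)
    thus ?thesis unfolding sinh_def u_def by simp
  qed
  also have "\<dots> = (1 - u^2)/(2*u)" using u by (simp add: field_simps power2_eq_square)
  also have "\<dots> = (1 - s)/u" using u by (simp add: u2 field_simps)
  finally have "(sinh s)^2 = (1-s)^2/(2*s-1)" using u2 by (simp add: power_divide)
  also have "\<dots> \<le> (9/64)/(1/4)"
  proof (rule frac_le)
    have "(1-s)^2 \<le> (3/8)^2" using assms(2,3) by (intro power_mono) auto
    thus "(1-s)^2 \<le> 9/64" by (simp add: power2_eq_square)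
  next show "0 \<le> (9/64::real)" by simp
  next show "0 < (1/4::real)" by simp
  next show "1/4 \<le> 2*s - 1" using assms(2) by simp
  qed
  also have "\<dots> = 9/16" by simp
  finally show ?thesis .
qed

lemma g_strict:
  fixes x y :: real
  assumes "0 < x" "x < y" "y \<le> 1"
  shows "cosh y / y < cosh x / x"
proof -
  have "(\<lambda>t. cosh t / t) y < (\<lambda>t. cosh t / t) x"
  proof (rule DERIV_neg_imp_decreasing[OF assms(2)])
    fix t :: real assume t: "x \<le> t" "t \<le> y"
    hence tp: "t > 0" "t \<le> 1" using assms by auto
    have d: "DERIV (\<lambda>t. cosh t / t) t :> (sinh t * t - cosh t * 1) / (t * t)"
      using tp by (auto intro!: derivative_eq_intros)
    have "sinh t * t \<le> sinh t" using tp by (simp add: mult_left_le)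
    hence "sinh t * t - cosh t < 0" using sinh_less_cosh_real[of t] by linarith
    hence "(sinh t * t - cosh t * 1) / (t * t) < 0" using tp by (simp add: divide_neg_pos)
    thus "\<exists>d. DERIV (\<lambda>t. cosh t / t) t :> d \<and> d < 0" using d by blast
  qed
  thus ?thesis by simp
qed

lemma omega_eq: "omega = (1/Xi) / cosh (1/Xi)"
  unfolding omega_def by (simp add: field_simps)

lemma pi_char:
  assumes h: "h > 0" and r: "r > 0" and hr: "h / r \<le> omega"
  shows "\<exists>t. 0 < t \<and> t \<le> 1/Xi \<and> Pi_hr h r = h / t"
proof -
  define s where "s = 1/Xi"
  have sb: "5/8 < s" "s < 1" using s_bounds unfolding s_def by auto
  have cs: "cosh s > 0" by (simp add: cosh_real_pos)
  define c where "c = r / h"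
  have cp: "c > 0" unfolding c_def using h r by simp
  have "h * cosh s \<le> r * s" using hr h r cs sb unfolding omega_eq s_def[symmetric]
    by (simp add: field_simps)
  hence gs: "cosh s / s \<le> c" unfolding c_def using h sb by (simp add: field_simps)
  define a where "a = min s (1/c)"
  have ap: "a > 0" "a \<le> s" unfolding a_def using sb cp by auto
  have "1/a \<ge> c" unfolding a_def using cp sb by (auto simp: min_def field_simps split: if_splits)
  moreover have "cosh a / a \<ge> 1/a" using ap by (intro divide_right_mono) (auto simp: cosh_real_ge_1)
  ultimately have ga: "c \<le> cosh a / a" by linarith
  have cont: "continuous_on {a..s} (\<lambda>t. cosh t / t)" using ap
    by (intro continuous_intros) auto
  obtain t0 where t0: "a \<le> t0" "t0 \<le> s" "cosh t0 / t0 = c"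
    using IVT2'[of "\<lambda>t. cosh t / t" s c a, OF gs ga ap(2) cont] by auto
  have t0p: "t0 > 0" using t0 ap by linarith
  define p0 where "p0 = h / t0"
  have p0p: "p0 > 0" unfolding p0_def using h t0p by simp
  have hp0: "h / p0 = t0" unfolding p0_def using h t0p by simp
  have P0: "p0 > 0 \<and> p0 * cosh (h / p0) = r"
    using p0p t0(3) t0p h unfolding hp0 c_def by (simp add: p0_def field_simps)
  have U: "p \<le> p0" if p: "p > 0 \<and> p * cosh (h / p) = r" for p
  proof (rule ccontr)
    assume "\<not> p \<le> p0"
    hence pp: "p > p0" by simp
    define t where "t = h / p"
    have tp: "t > 0" unfolding t_def using h p by simp
    have "t < t0" unfolding t_def hp0[symmetric] using pp p0p h by (simp add: frac_less2)
    hence "cosh t0 / t0 < cosh t / t" using g_strict[of t t0] tp t0 sb by linarith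
    moreover have "cosh t / t = c" unfolding c_def t_def using p h by (auto simp: field_simps)
    ultimately show False using t0(3) by simp
  qed
  have "Pi_hr h r = p0" unfolding Pi_hr_def
    by (rule Greatest_equality) (use P0 U in auto)
  thus ?thesis using t0p t0 s_def p0_def by auto
qed

lemma sinh_s_lt: "sinh (1/Xi) < z0"
proof -
  define s where "s = 1/Xi"
  have sb: "5/8 < s" "s < 1" using s_bounds unfolding s_def by auto
  have sq: "(sinh s)^2 \<le> 9/16" using sinh_sq[of s] Xi_facts sb unfolding s_def by auto
  have "(17/8::real)^2 < 5" by (simp add: power2_eq_square)
  hence "17/8 < sqrt 5" by (rule real_less_rsqrt)
  hence "(sinh s)^2 < (sqrt 5 - 1)/2" using sq by simp
  hence "sinh s < sqrt ((sqrt 5 - 1)/2)" by (rule real_less_rsqrt)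
  thus ?thesis unfolding z0_def s_def .
qed

theorem lemma4p2:
  shows "bdd_above {sinh (h / Pi_hr h r) | h r. h > 0 \<and> r > 0 \<and> h / r \<le> omega}
    \<and> Sup {sinh (h / Pi_hr h r) | h r. h > 0 \<and> r > 0 \<and> h / r \<le> omega} < z0"
proof -
  let ?S = "{sinh (h / Pi_hr h r) | h r. h > 0 \<and> r > 0 \<and> h / r \<le> omega}"
  have ub: "x \<le> sinh (1/Xi)" if "x \<in> ?S" for x
  proof -
    obtain h r where hr: "x = sinh (h / Pi_hr h r)" "h > 0" "r > 0" "h / r \<le> omega"
      using \<open>x \<in> ?S\<close> by blast
    obtain t where t: "0 < t" "t \<le> 1/Xi" "Pi_hr h r = h / t" using pi_char[OF hr(2-4)] by blast
    have "h / Pi_hr h r = t" using t hr(2) by simp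
    thus ?thesis using hr(1) t(2) by simp
  qed
  have om: "omega > 0" unfolding omega_def using Xi_facts by (simp add: cosh_real_pos)
  have ne: "?S \<noteq> {}"
  proof -
    have "sinh (omega / Pi_hr omega 1) \<in> ?S" using om by (intro CollectI exI[of _ omega] exI[of _ 1]) simp
    thus ?thesis by blast
  qed
  have bdd: "bdd_above ?S" by (rule bdd_aboveI[of _ "sinh (1/Xi)"]) (rule ub)
  have "Sup ?S \<le> sinh (1/Xi)" using ne ub by (intro cSup_least) auto
  thus ?thesis using bdd sinh_s_lt by linarith
qed

end
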